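(* Let $d$ be a positive integer, let $S\in L^2(\mathbb{H})$ be the function constructed below, let $S_j(\omega)=2^{4j}S(2^j\cdot\omega)$ and $V_j=\{f\ast S_j: f\in L^2(\mathbb{H})\}$ for $j\in\mathbb{Z}$. Suppose $\Gamma$ is a lattice in $\mathbb{H}$ and $\phi\in V_0$ is such that $\{L_\gamma\phi\}_{\gamma\in\Gamma}$ is a normalized tight frame of $V_0$. Then for every $j\in\mathbb{Z}$, the family $\{\phi_{j,\gamma}\}_{\gamma\in\Gamma}$, where $\phi_{j,\gamma}(\omega)=2^{2j}\phi\big(\gamma^{-1}(2^j\cdot\omega)\big)$, is a normalized tight frame of $V_j$.
   Context: The Heisenberg group $\mathbb{H}$ is $\mathbb{R}^3$ with product $(p_1,q_1,t_1)(p_2,q_2,t_2)=(p_1+p_2,q_1+q_2,t_1+t_2+\frac12(p_1q_2-q_1p_2))$ and Lebesgue (Haar) measure; for $a>0$, $a\cdot(p,q,t)=(ap,aq,a^2t)$ is an automorphism. Convolution: $f\ast g(\omega)=\int_{\mathbb{H}}f(\nu)g(\nu^{-1}\omega)\,d\nu$. Left translation: $L_\omega f(v)=f(\omega^{-1}v)$. A lattice is a discrete subgroup with compact quotient. A family $\{g_n\}$ in a Hilbert space $\mathcal{H}$ is a normalized tight frame of $\mathcal{H}$ if $\sum_n|\langle f,g_n\rangle|^2=\|f\|^2$ for all $f\in\mathcal{H}$. For $\lambda\neq0$, $\rho_\lambda(p,q,t)\phi(x)=e^{i\lambda t}e^{i\lambda(px+\frac12pq)}\phi(x+q)$ on $L^2(\mathbb{R})$;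 the Fourier transform $\hat f(\lambda)=\int_{\mathbb{H}}f(\omega)\rho_\lambda(\omega)d\omega$ extends by Plancherel to a unitary map from $L^2(\mathbb{H})$ onto the square-integrable measurable fields of Hilbert–Schmidt operators on $L^2(\mathbb{R})$ over $\mathbb{R}\setminus\{0\}$ with respect to $d\mu(\lambda)=(2\pi)^{-2}|\lambda|d\lambda$. Construction of $S$: fix an orthonormal basis $\{e_i\}_{i\in\mathbb{N}_0}$ of $L^2(\mathbb{R})$, put $e_i^\lambda(x)=|\lambda|^{1/4}e_i(|\lambda|^{1/2}x)$, and for $k\in\mathbb{N}_0$ let $I^k=\left[-\frac{\pi}{2^{2k+1}d},-\frac{\pi}{2^{2k+3}d}\right)\cup\left(\frac{\pi}{2^{2k+3}d},\frac{\pi}{2^{2k+1}d}\right]$. With $u\otimes u$ the operator $g\mapsto\langle g,u\rangle u$, $S$ is the unique element of $L^2(\mathbb{H})$ with $\hat S(\lambda)=\sum_{i=0}^{2^{2k}}e_i^{\lambda/2\pi}\otimes e_i^{\lambda/2\pi}$ if $\lambda\in I^k$ for some $k$, and $\hat S(\lambda)=0$ otherwise. *)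

theory Defs
  imports "HOL-Analysis.Analysis"
begin

type_synonym hpt = "real \<times> real \<times> real"

definition hmult :: "hpt \<Rightarrow> hpt \<Rightarrow> hpt" where
  "hmult x y = (case x of (p1, q1, t1) \<Rightarrow> case y of (p2, q2, t2) \<Rightarrow>
      (p1 + p2, q1 + q2, t1 + t2 + (p1 * q2 - q1 * p2) / 2))"

definition hinv :: "hpt \<Rightarrow> hpt" where
  "hinv x = (case x of (p, q, t) \<Rightarrow> (-p, -q, -t))"

definition hdil :: "real \<Rightarrow> hpt \<Rightarrow> hpt" where
  "hdil a x = (case x of (p, q, t) \<Rightarrow> (a * p, a * q, a^2 * t))"

section \<open>L^1 / L^2 notions (Lebesgue = Haar measure)\<close>

definition L2 :: "'a::euclidean_space measure \<Rightarrow> ('a \<Rightarrow> complex) \<Rightarrow> bool" where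
  "L2 M f \<longleftrightarrow> f \<in> borel_measurable M \<and> integrable M (\<lambda>x. (cmod (f x))^2)"

definition l2inner :: "'a measure \<Rightarrow> ('a \<Rightarrow> complex) \<Rightarrow> ('a \<Rightarrow> complex) \<Rightarrow> complex" where
  "l2inner M f g = (LINT x|M. f x * cnj (g x))"

definition l2norm2 :: "'a measure \<Rightarrow> ('a \<Rightarrow> complex) \<Rightarrow> real" where
  "l2norm2 M f = (LINT x|M. (cmod (f x))^2)"

definition hconv :: "(hpt \<Rightarrow> complex) \<Rightarrow> (hpt \<Rightarrow> complex) \<Rightarrow> hpt \<Rightarrow> complex" where
  "hconv f g w = (LINT v|lborel. f v * g (hmult (hinv v) w))"

definition hleft :: "hpt \<Rightarrow> (hpt \<Rightarrow> complex) \<Rightarrow> hpt \<Rightarrow> complex" where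
  "hleft w f = (\<lambda>v. f (hmult (hinv w) v))"

definition tight_frame :: "(hpt \<Rightarrow> complex) set \<Rightarrow> ('i \<Rightarrow> hpt \<Rightarrow> complex) \<Rightarrow> 'i set \<Rightarrow> bool" where
  "tight_frame V g I \<longleftrightarrow> (\<forall>i\<in>I. g i \<in> V) \<and>
     (\<forall>h\<in>V. ((\<lambda>i. (cmod (l2inner lborel h (g i)))^2) has_sum l2norm2 lborel h) I)"

definition hcosets :: "hpt set \<Rightarrow> hpt set set" where
  "hcosets \<Gamma> = range (\<lambda>w. (\<lambda>\<gamma>. hmult \<gamma> w) ` \<Gamma>)"

definition hquot_top :: "hpt set \<Rightarrow> hpt set topology" where
  "hquot_top \<Gamma> = topology (\<lambda>U. U \<subseteq> hcosets \<Gamma> \<and> open (\<Union>U))"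

definition hlattice :: "hpt set \<Rightarrow> bool" where
  "hlattice \<Gamma> \<longleftrightarrow>
     (0, 0, 0) \<in> \<Gamma> \<and> (\<forall>x\<in>\<Gamma>. \<forall>y\<in>\<Gamma>. hmult x y \<in> \<Gamma>) \<and> (\<forall>x\<in>\<Gamma>. hinv x \<in> \<Gamma>) \<and>
     (\<forall>x\<in>\<Gamma>. \<exists>e>0. \<forall>y\<in>\<Gamma>. dist x y < e \<longrightarrow> y = x) \<and>
     compact_space (hquot_top \<Gamma>)"

definition ONB_L2R :: "(nat \<Rightarrow> real \<Rightarrow> complex) \<Rightarrow> bool" where
  "ONB_L2R e \<longleftrightarrow> (\<forall>i. L2 lborel (e i)) \<and>
     (\<forall>i j. l2inner lborel (e i) (e j) = (if i = j then 1 else 0)) \<and>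
     (\<forall>g. L2 lborel g \<and> (\<forall>i. l2inner lborel g (e i) = 0) \<longrightarrow> (AE x in lborel. g x = 0))"

definition ebas :: "(nat \<Rightarrow> real \<Rightarrow> complex) \<Rightarrow> real \<Rightarrow> nat \<Rightarrow> real \<Rightarrow> complex" where
  "ebas e lam i x = complex_of_real (\<bar>lam\<bar> powr (1/4)) * e i (sqrt \<bar>lam\<bar> * x)"

definition rho :: "real \<Rightarrow> hpt \<Rightarrow> (real \<Rightarrow> complex) \<Rightarrow> real \<Rightarrow> complex" where
  "rho lam w u x = (case w of (p, q, t) \<Rightarrow>
     cis (lam * t) * cis (lam * (p * x + p * q / 2)) * u (x + q))"

definition hfourier_coeff :: "(hpt \<Rightarrow> complex) \<Rightarrow> real \<Rightarrow> (real \<Rightarrow> complex) \<Rightarrow> (real \<Rightarrow> complex) \<Rightarrow> complex" where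
  "hfourier_coeff f lam u v = (LINT w|lborel. f w * l2inner lborel (rho lam w u) v)"

definition Iset :: "nat \<Rightarrow> nat \<Rightarrow> real set" where
  "Iset d k = {lam. - pi / (2^(2*k+1) * real d) \<le> lam \<and> lam < - pi / (2^(2*k+3) * real d)}
            \<union> {lam. pi / (2^(2*k+3) * real d) < lam \<and> lam \<le> pi / (2^(2*k+1) * real d)}"

text \<open>Matrix entries <S^(lam) b_i, b_m> in the basis b = e^(lam/2pi).\<close>
definition S_coeff :: "nat \<Rightarrow> real \<Rightarrow> nat \<Rightarrow> nat \<Rightarrow> complex" where
  "S_coeff d lam i m = (if i = m \<and> (\<exists>k. lam \<in> Iset d k \<and> i \<le> 2^(2*k)) then 1 else 0)"

definition hs_dist2 :: "(nat \<Rightarrow> real \<Rightarrow> complex) \<Rightarrow> nat \<Rightarrow> (hpt \<Rightarrow> complex) \<Rightarrow> real \<Rightarrow> ennreal" where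
  "hs_dist2 e d f lam = (\<Sum>\<^sub>\<infinity>(i, m)\<in>UNIV.
      ennreal ((cmod (hfourier_coeff f lam (ebas e (lam / (2*pi)) i) (ebas e (lam / (2*pi)) m)
                      - S_coeff d lam i m))^2))"

text \<open>S in L^2(H) has Plancherel transform S^: it is the L^2-limit of functions f_n in
  L^1 cap L^2 whose Fourier transforms converge to S^ in L^2(mu), mu = (2pi)^-2 |lam| dlam
  (this is exactly the extension of the Fourier transform by continuity).\<close>
definition is_S :: "(nat \<Rightarrow> real \<Rightarrow> complex) \<Rightarrow> nat \<Rightarrow> (hpt \<Rightarrow> complex) \<Rightarrow> bool" where
  "is_S e d S \<longleftrightarrow> L2 lborel S \<and>
     (\<exists>fs. (\<forall>n. integrable lborel (fs n) \<and> L2 lborel (fs n)) \<and>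
        (\<lambda>n. \<integral>\<^sup>+ x. ennreal ((cmod (fs n x - S x))^2) \<partial>lborel) \<longlonglongrightarrow> 0 \<and>
        (\<lambda>n. \<integral>\<^sup>+ lam. indicator (- {0}) lam * ennreal (\<bar>lam\<bar> / (4 * pi^2)) * hs_dist2 e d (fs n) lam
              \<partial>lborel) \<longlonglongrightarrow> 0)"

definition Sj :: "(hpt \<Rightarrow> complex) \<Rightarrow> int \<Rightarrow> hpt \<Rightarrow> complex" where
  "Sj S j w = complex_of_real ((2 powr real_of_int j)^4) * S (hdil (2 powr real_of_int j) w)"

definition Vsp :: "(hpt \<Rightarrow> complex) \<Rightarrow> int \<Rightarrow> (hpt \<Rightarrow> complex) set" where
  "Vsp S j = {g. L2 lborel g \<and> (\<exists>f. L2 lborel f \<and> (AE x in lborel. g x = hconv f (Sj S j) x))}"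

definition phij :: "(hpt \<Rightarrow> complex) \<Rightarrow> int \<Rightarrow> hpt \<Rightarrow> hpt \<Rightarrow> complex" where
  "phij \<phi> j \<gamma> w = complex_of_real ((2 powr real_of_int j)^2) * \<phi> (hmult (hinv \<gamma>) (hdil (2 powr real_of_int j) w))"

end

theory Submission
  imports Defs
begin

lemma hdil_sum: "b > 0 \<Longrightarrow> hdil b x = 0 + (\<Sum>k\<in>Basis. ((if k = (0,0,1) then b^2 else b) * (x \<bullet> k)) *\<^sub>R k)"
  by (cases x) (simp add: hdil_def Basis_prod_def sum.union_disjoint sum.reindex inner_prod_def)

lemma hdil_prod: "(b::real) > 0 \<Longrightarrow> (\<Prod>k\<in>(Basis::hpt set). \<bar>if k = (0,0,1) then b^2 else b\<bar>) = b^4"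
  by (simp add: Basis_prod_def prod.union_disjoint prod.reindex inj_on_def) (simp add: power_def abs_of_pos abs_mult)

lemma lborel_hdil: "b > 0 \<Longrightarrow> lborel = density (distr lborel borel (hdil b)) (\<lambda>_. b^4)"
proof -
  assume b: "b > 0"
  have "lborel = density (distr lborel borel (\<lambda>x::hpt. 0 + (\<Sum>k\<in>Basis. ((if k = (0,0,1) then b^2 else b) * (x \<bullet> k)) *\<^sub>R k)))
     (\<lambda>_. (\<Prod>k\<in>(Basis::hpt set). \<bar>if k = (0,0,1) then b^2 else b\<bar>))"
    by (rule lborel_affine_euclidean) (use b in auto)
  also have "(\<lambda>x::hpt. 0 + (\<Sum>k\<in>Basis. ((if k = (0,0,1) then b^2 else b) * (x \<bullet> k)) *\<^sub>R k)) = hdil b"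
    using hdil_sum[OF b] by auto
  finally show ?thesis using hdil_prod[OF b] by simp
qed

lemma hdil_eq: "hdil b = (\<lambda>x. (b * fst x, b * fst (snd x), b^2 * snd (snd x)))"
  by (auto simp: hdil_def split: prod.splits)

lemma hdil_meas[measurable]: "hdil b \<in> borel_measurable borel"
  apply (unfold hdil_eq)
  apply (rule borel_measurable_continuous_onI)
  apply (intro continuous_intros)
  done

lemma hdil_meas2[measurable]: "hdil b \<in> lborel \<rightarrow>\<^sub>M lborel"
  using hdil_meas by (simp cong: measurable_cong_sets)

lemma hmult_inv_eq: "hmult (hinv v) w = (fst w - fst v, fst (snd w) - fst (snd v),
    snd (snd w) - snd (snd v) + (fst (snd v) * fst w - fst v * fst (snd w)) / 2)"
  by (auto simp: hmult_def hinv_def split: prod.splits)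

lemma hmult_meas[measurable]: "(\<lambda>v. hmult (hinv v) w) \<in> lborel \<rightarrow>\<^sub>M lborel"
  unfolding hmult_inv_eq
  by (simp cong: measurable_cong_sets, rule borel_measurable_continuous_onI, intro continuous_intros, auto)

lemma hdil_hmult: "hdil a (hmult (hinv v) w) = hmult (hinv (hdil a v)) (hdil a w)"
  by (cases v, cases w) (simp add: hdil_def hmult_def hinv_def algebra_simps power2_eq_square add_divide_distrib diff_divide_distrib)

lemma hdil_hdil: "hdil a (hdil b w) = hdil (b*a) w"
  by (auto simp: hdil_def split: prod.splits simp: algebra_simps power2_eq_square)

lemma hdil_1: "hdil 1 w = w"
  by (auto simp: hdil_def split: prod.splits)

lemma int_hdil:
  fixes f :: "hpt \<Rightarrow> 'c::{banach, second_countable_topology}"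
  assumes b: "b > 0" and f[measurable]: "f \<in> borel_measurable lborel"
  shows "integral\<^sup>L lborel f = b^4 *\<^sub>R integral\<^sup>L lborel (\<lambda>x. f (hdil b x))"
proof -
  have fb[measurable]: "f \<in> borel_measurable borel" using f by simp
  have "integral\<^sup>L lborel f = integral\<^sup>L (density (distr lborel borel (hdil b)) (\<lambda>_. b^4)) f"
    using lborel_hdil[OF b] by simp
  also have "\<dots> = integral\<^sup>L (distr lborel borel (hdil b)) (\<lambda>x. b^4 *\<^sub>R f x)"
    by (rule integral_density) (use b in auto)
  also have "\<dots> = integral\<^sup>L lborel (\<lambda>x. b^4 *\<^sub>R f (hdil b x))"
    by (rule integral_distr) auto
  finally show ?thesis by simp
qed

lemma intble_hdil:
  fixes f :: "hpt \<Rightarrow> 'c::{banach, second_countable_topology}"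
  assumes b: "b > 0" and f[measurable]: "f \<in> borel_measurable lborel"
  shows "integrable lborel f \<longleftrightarrow> integrable lborel (\<lambda>x. f (hdil b x))"
proof -
  have fb[measurable]: "f \<in> borel_measurable borel" using f by simp
  have "integrable lborel f \<longleftrightarrow> integrable (density (distr lborel borel (hdil b)) (\<lambda>_. b^4)) f"
    using lborel_hdil[OF b] by simp
  also have "\<dots> \<longleftrightarrow> integrable (distr lborel borel (hdil b)) (\<lambda>x. b^4 *\<^sub>R f x)"
    by (rule integrable_density) (use b in auto)
  also have "\<dots> \<longleftrightarrow> integrable lborel (\<lambda>x. b^4 *\<^sub>R f (hdil b x))"
    by (rule integrable_distr_eq) auto
  also have "\<dots> \<longleftrightarrow> integrable lborel (\<lambda>x. f (hdil b x))"
  proof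
    assume "integrable lborel (\<lambda>x. b^4 *\<^sub>R f (hdil b x))"
    then have "integrable lborel (\<lambda>x. (1/b^4) *\<^sub>R (b^4 *\<^sub>R f (hdil b x)))"
      by (rule integrable_scaleR_right)
    then show "integrable lborel (\<lambda>x. f (hdil b x))" using b by simp
  qed auto
  finally show ?thesis .
qed

lemma AE_hdil:
  assumes b: "b > 0" and ae: "AE x in lborel. P x"
  shows "AE x in lborel. P (hdil b x)"
proof -
  have "AE x in density (distr lborel borel (hdil b)) (\<lambda>_. b^4). P x"
    using ae by (subst lborel_hdil[OF b, symmetric])
  then have "AE x in distr lborel borel (hdil b). P x"
    using b by (subst (asm) AE_density) auto
  then obtain N where N: "\<And>x. x \<in> space (distr lborel borel (hdil b)) - N \<Longrightarrow> P x"
    "N \<in> null_sets (distr lborel borel (hdil b))" by (rule AE_E3) blast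
  have Ns: "N \<in> sets borel" using N(2) by (auto dest: null_setsD2)
  have "emeasure lborel (hdil b -` N) = 0"
    using N(2) Ns by (simp add: emeasure_distr null_sets_def)
  then have NN: "hdil b -` N \<in> null_sets lborel" using Ns measurable_sets_borel[OF hdil_meas Ns] by (auto simp: null_sets_def)
  moreover have N1: "\<And>y. y \<notin> N \<Longrightarrow> P y" using N(1) by simp
  show ?thesis
    by (rule AE_I'[OF NN]) (use N1 in blast)
qed

lemma cnj_meas[measurable]: "h \<in> borel_measurable M \<Longrightarrow> (\<lambda>x. cnj (h x)) \<in> borel_measurable M"
  by (rule borel_measurable_continuous_on[where f=cnj]) (auto intro!: continuous_intros)

lemma lb_b: "h \<in> borel_measurable lborel \<Longrightarrow> h \<in> borel_measurable borel" by simp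

lemma a4: "a > 0 \<Longrightarrow> (cmod ((complex_of_real a)^2))^2 = a^4"
  by (simp add: norm_power power_mult_distrib abs_of_pos flip: power_mult)

definition Dl :: "real \<Rightarrow> (hpt \<Rightarrow> complex) \<Rightarrow> hpt \<Rightarrow> complex" where
  "Dl a h = (\<lambda>w. complex_of_real (a^2) * h (hdil a w))"

lemma Dl_meas[measurable]: assumes "h \<in> borel_measurable lborel" shows "Dl a h \<in> borel_measurable lborel"
proof -
  note [measurable] = lb_b[OF assms]
  show ?thesis unfolding Dl_def by measurable
qed

lemma L2_Dl:
  assumes a: "a > 0" and h: "L2 lborel h"
  shows "L2 lborel (Dl a h)"
proof -
  have hm[measurable]: "h \<in> borel_measurable lborel" using h by (simp add: L2_def)
  have [measurable]: "h \<in> borel_measurable borel" using h by (simp add: L2_def)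
  have "integrable lborel (\<lambda>x. (cmod (h x))^2)" using h by (simp add: L2_def)
  then have "integrable lborel (\<lambda>x. (cmod (h (hdil a x)))^2)"
    using intble_hdil[OF a, of "\<lambda>x. (cmod (h x))^2"] by simp
  then have "integrable lborel (\<lambda>x. a^4 * (cmod (h (hdil a x)))^2)"
    by (rule integrable_mult_right)
  moreover have "\<And>x. (cmod (Dl a h x))^2 = a^4 * (cmod (h (hdil a x)))^2"
    by (simp add: Dl_def norm_mult power_mult_distrib a4[OF a])
  ultimately show ?thesis using hm by (simp add: L2_def)
qed

lemma inner_Dl:
  assumes a: "a > 0" and [measurable]: "g \<in> borel_measurable lborel" "h \<in> borel_measurable lborel"
  shows "l2inner lborel (Dl a g) (Dl a h) = l2inner lborel g h"
proof -
  note [measurable] = lb_b[OF assms(2)] lb_b[OF assms(3)]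
  have "l2inner lborel g h = a^4 *\<^sub>R (LINT x|lborel. g (hdil a x) * cnj (h (hdil a x)))"
    unfolding l2inner_def by (rule int_hdil[OF a]) measurable
  moreover have "l2inner lborel (Dl a g) (Dl a h) =
      (LINT x|lborel. complex_of_real (a^4) * (g (hdil a x) * cnj (h (hdil a x))))"
    unfolding l2inner_def Dl_def by (intro Bochner_Integration.integral_cong) (simp_all add: power_def)
  ultimately show ?thesis by (simp add: scaleR_conv_of_real)
qed

lemma norm_Dl:
  assumes a: "a > 0" and [measurable]: "h \<in> borel_measurable lborel"
  shows "l2norm2 lborel (Dl a h) = l2norm2 lborel h"
proof -
  note [measurable] = lb_b[OF assms(2)]
  have "l2norm2 lborel h = a^4 *\<^sub>R (LINT x|lborel. (cmod (h (hdil a x)))^2)"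
    unfolding l2norm2_def by (rule int_hdil[OF a]) measurable
  moreover have "l2norm2 lborel (Dl a h) =
      (LINT x|lborel. a^4 * (cmod (h (hdil a x)))^2)"
    unfolding l2norm2_def Dl_def by (simp add: norm_mult power_mult_distrib a4[OF a])
  ultimately show ?thesis by simp
qed

lemma conv_Dl:
  assumes a: "a > 0" and [measurable]: "f \<in> borel_measurable lborel" "K \<in> borel_measurable lborel"
  shows "hconv (Dl a f) (\<lambda>w. complex_of_real (a^4) * K (hdil a w)) w = complex_of_real (a^2) * hconv f K (hdil a w)"
proof -
  note [measurable] = lb_b[OF assms(2)] lb_b[OF assms(3)]
  define F where "F u = f u * K (hmult (hinv u) (hdil a w))" for u
  have [measurable]: "F \<in> borel_measurable lborel" unfolding F_def by measurable
  have "hconv f K (hdil a w) = a^4 *\<^sub>R (LINT x|lborel. F (hdil a x))"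
    unfolding hconv_def F_def[symmetric] by (rule int_hdil[OF a]) measurable
  moreover have "hconv (Dl a f) (\<lambda>w. complex_of_real (a^4) * K (hdil a w)) w =
      (LINT x|lborel. complex_of_real (a^6) * F (hdil a x))"
    unfolding hconv_def Dl_def F_def by (intro Bochner_Integration.integral_cong) (simp_all add: hdil_hmult power_def)
  ultimately show ?thesis using a by (simp add: scaleR_conv_of_real power_def)
qed

lemma Vsp_L2: "g \<in> Vsp S j \<Longrightarrow> L2 lborel g" by (simp add: Vsp_def)
lemma L2_meas: "L2 lborel g \<Longrightarrow> g \<in> borel_measurable lborel" by (simp add: L2_def)

lemma Sj_0: "Sj S 0 = S"
  by (rule ext) (simp add: Sj_def hdil_1)

lemma Sj_meas: assumes "S \<in> borel_measurable lborel" shows "Sj S j \<in> borel_measurable lborel"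
proof -
  note [measurable] = lb_b[OF assms]
  show ?thesis unfolding Sj_def by measurable
qed

lemma V_fwd:
  assumes Sm: "S \<in> borel_measurable lborel" and h: "h \<in> Vsp S 0"
  shows "Dl (2 powr real_of_int j) h \<in> Vsp S j"
proof -
  define a where "a = (2::real) powr real_of_int j"
  have a: "a > 0" unfolding a_def by simp
  obtain f where f: "L2 lborel f" and ae: "AE x in lborel. h x = hconv f S x"
    using h by (auto simp: Vsp_def Sj_0)
  have ae2: "AE x in lborel. h (hdil a x) = hconv f S (hdil a x)"
    by (rule AE_hdil[OF a ae])
  have eq: "hconv (Dl a f) (Sj S j) w = complex_of_real (a^2) * hconv f S (hdil a w)" for w
    unfolding Sj_def a_def[symmetric]
    by (rule conv_Dl[OF a L2_meas[OF f] Sm])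
  have "AE x in lborel. Dl a h x = hconv (Dl a f) (Sj S j) x"
    using ae2 by eventually_elim (subst eq, simp add: Dl_def)
  moreover have "L2 lborel (Dl a h)" by (rule L2_Dl[OF a Vsp_L2[OF h]])
  moreover have "L2 lborel (Dl a f)" by (rule L2_Dl[OF a f])
  ultimately show ?thesis unfolding a_def Vsp_def by blast
qed

lemma V_bwd:
  assumes Sm: "S \<in> borel_measurable lborel" and g: "g \<in> Vsp S j"
  shows "Dl (1 / 2 powr real_of_int j) g \<in> Vsp S 0 \<and> Dl (2 powr real_of_int j) (Dl (1 / 2 powr real_of_int j) g) = g"
proof -
  define a where "a = (2::real) powr real_of_int j"
  have a: "a > 0" unfolding a_def by simp
  define b where "b = 1 / a"
  have b: "b > 0" using a unfolding b_def by simp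
  have ab: "b * a = 1" "a * b = 1" using a unfolding b_def by simp_all
  obtain f where f: "L2 lborel f" and ae: "AE x in lborel. g x = hconv f (Sj S j) x"
    using g by (auto simp: Vsp_def)
  have ae2: "AE x in lborel. g (hdil b x) = hconv f (Sj S j) (hdil b x)"
    by (rule AE_hdil[OF b ae])
  have K: "(\<lambda>w. complex_of_real (b^4) * Sj S j (hdil b w)) = S"
  proof
    fix w
    have "complex_of_real (b^4) * Sj S j (hdil b w) = complex_of_real ((b*a)^4) * S (hdil (b*a) w)"
      unfolding Sj_def a_def[symmetric] hdil_hdil by (simp add: power_mult_distrib)
    then show "complex_of_real (b^4) * Sj S j (hdil b w) = S w" using ab by (simp add: hdil_1)
  qed
  have eq: "hconv (Dl b f) S w = complex_of_real (b^2) * hconv f (Sj S j) (hdil b w)" for w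
    using conv_Dl[OF b L2_meas[OF f] Sj_meas[OF Sm], of j w] unfolding K .
  have "AE x in lborel. Dl b g x = hconv (Dl b f) (Sj S 0) x"
    using ae2 by eventually_elim (subst Sj_0, subst eq, simp add: Dl_def)
  moreover have "L2 lborel (Dl b g)" by (rule L2_Dl[OF b Vsp_L2[OF g]])
  moreover have "L2 lborel (Dl b f)" by (rule L2_Dl[OF b f])
  ultimately have 1: "Dl b g \<in> Vsp S 0" unfolding Vsp_def by blast
  have "Dl a (Dl b g) = g"
  proof
    fix w
    have "Dl a (Dl b g) w = complex_of_real ((a*b)^2) * g (hdil (a*b) w)"
      unfolding Dl_def hdil_hdil by (simp add: power_mult_distrib)
    then show "Dl a (Dl b g) w = g w" using ab by (simp add: hdil_1)
  qed
  with 1 show ?thesis unfolding b_def a_def by simp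
qed

theorem mainTheorem4:
  fixes d :: nat and e :: "nat \<Rightarrow> real \<Rightarrow> complex" and S \<phi> :: "hpt \<Rightarrow> complex"
    and \<Gamma> :: "hpt set" and j :: int
  assumes "d > 0"
    and "ONB_L2R e"
    and "is_S e d S"
    and "hlattice \<Gamma>"
    and "\<phi> \<in> Vsp S 0"
    and "tight_frame (Vsp S 0) (\<lambda>\<gamma>. hleft \<gamma> \<phi>) \<Gamma>"
  shows "tight_frame (Vsp S j) (phij \<phi> j) \<Gamma>"
proof -
  define a where "a = (2::real) powr real_of_int j"
  have a: "a > 0" unfolding a_def by simp
  have Sm: "S \<in> borel_measurable lborel" using assms(3) by (simp add: is_S_def L2_def)
  have tf1: "\<And>\<gamma>. \<gamma> \<in> \<Gamma> \<Longrightarrow> hleft \<gamma> \<phi> \<in> Vsp S 0" using assms(6) by (simp add: tight_frame_def)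
  have tf2: "\<And>h. h \<in> Vsp S 0 \<Longrightarrow> ((\<lambda>\<gamma>. (cmod (l2inner lborel h (hleft \<gamma> \<phi>)))^2) has_sum l2norm2 lborel h) \<Gamma>"
    using assms(6) by (simp add: tight_frame_def)
  have ph: "phij \<phi> j \<gamma> = Dl a (hleft \<gamma> \<phi>)" for \<gamma>
    by (rule ext) (simp add: phij_def Dl_def hleft_def a_def)
  show ?thesis
    unfolding tight_frame_def
  proof (intro conjI ballI)
    fix \<gamma> assume "\<gamma> \<in> \<Gamma>"
    then show "phij \<phi> j \<gamma> \<in> Vsp S j"
      unfolding ph a_def by (rule V_fwd[OF Sm tf1])
  next
    fix g assume g: "g \<in> Vsp S j"
    define h where "h = Dl (1 / 2 powr real_of_int j) g"
    have h: "h \<in> Vsp S 0" and gh: "g = Dl a h"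
      using V_bwd[OF Sm g] unfolding h_def a_def by auto
    have hm: "h \<in> borel_measurable lborel" by (rule L2_meas[OF Vsp_L2[OF h]])
    have "((\<lambda>\<gamma>. (cmod (l2inner lborel h (hleft \<gamma> \<phi>)))^2) has_sum l2norm2 lborel h) \<Gamma>"
      by (rule tf2[OF h])
    moreover have "l2norm2 lborel g = l2norm2 lborel h"
      unfolding gh by (rule norm_Dl[OF a hm])
    moreover have "l2inner lborel g (phij \<phi> j \<gamma>) = l2inner lborel h (hleft \<gamma> \<phi>)" if "\<gamma> \<in> \<Gamma>" for \<gamma>
      unfolding gh ph by (rule inner_Dl[OF a hm L2_meas[OF Vsp_L2[OF tf1[OF that]]]])
    ultimately show "((\<lambda>\<gamma>. (cmod (l2inner lborel g (phij \<phi> j \<gamma>)))^2) has_sum l2norm2 lborel g) \<Gamma>"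
      by (metis (no_types, lifting) has_sum_cong)
  qed
qed

end
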